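(* Let $0<q<1$. Then $$\int_0^\infty A_q^2(u^{-1})\,w_{SW}(u;q)\,du=(q;q)_\infty .$$
   Context: Notation: $(a;q)_k:=\prod_{j=0}^{k-1}(1-aq^j)$ (with $(a;q)_0:=1$), $(q;q)_\infty:=\prod_{j=1}^{\infty}(1-q^j)$. Ramanujan's function is $A_q(z):=\sum_{k=0}^{\infty}\frac{q^{k^2}}{(q;q)_k}(-z)^k$. The Stieltjes–Wigert weight is $w_{SW}(x;q):=\sqrt{\frac{-1}{2\pi\log q}}\exp\left\{\frac{1}{2\log q}\left[\log\left(\frac{x}{\sqrt q}\right)\right]^2\right\}$ for $x>0$. *)

theory Defs
  imports "HOL-Analysis.Analysis"
begin

definition qpoch :: "real \<Rightarrow> real \<Rightarrow> nat \<Rightarrow> real" where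
  "qpoch a q k = (\<Prod>j<k. 1 - a * q ^ j)"

definition qpoch_inf :: "real \<Rightarrow> real" where
  "qpoch_inf q = (\<Prod>j. 1 - q ^ (Suc j))"

definition ramanujanA :: "real \<Rightarrow> real \<Rightarrow> real" where
  "ramanujanA q z = (\<Sum>k. q ^ (k^2) / qpoch q q k * (- z) ^ k)"

definition w_SW :: "real \<Rightarrow> real \<Rightarrow> real" where
  "w_SW x q = sqrt (-1 / (2 * pi * ln q)) * exp (1 / (2 * ln q) * (ln (x / sqrt q))^2)"

end

theory Submission
  imports Defs "HOL-Probability.Probability"
begin




fun tri :: "nat \<Rightarrow> nat" where
  "tri 0 = 0" | "tri (Suc n) = tri n + n"

lemma tri_add: "tri (j + k) = tri j + j * k + tri k"
  by (induction k) auto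

lemma tri_le_sq: "tri k \<le> k * k"
  by (induction k) auto

lemma two_tri: "2 * tri n = n * (n - 1)"
  by (induction n) (auto simp: algebra_simps)

lemma qpoch_Suc: "qpoch a q (Suc k) = qpoch a q k * (1 - a * q ^ k)"
  by (simp add: qpoch_def)

lemma one_minus_ge_exp:
  fixes x q :: real
  assumes "0 \<le> x" "x \<le> q" "q < 1"
  shows "exp (- x / (1 - q)) \<le> 1 - x"
proof -
  have "1 + x / (1 - x) \<le> exp (x / (1 - x))" by (rule exp_ge_add_one_self)
  moreover have "1 + x / (1 - x) = 1 / (1 - x)" using assms by (simp add: field_simps)
  ultimately have "exp (- (x / (1 - x))) \<le> 1 - x" using assms
    by (simp add: exp_minus field_simps)
  moreover have "- x / (1 - q) \<le> - (x / (1 - x))" using assms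
    by (simp add: frac_le divide_left_mono)
  ultimately show ?thesis by (meson exp_le_cancel_iff order_trans)
qed

definition qdelta :: "real \<Rightarrow> real" where "qdelta q = exp (- 1 / (1 - q)^2)"

lemma qpoch_lower:
  assumes "0 < q" "q < 1"
  shows "qdelta q \<le> qpoch q q k"
proof -
  have "exp (- (\<Sum>j<k. q ^ Suc j / (1 - q))) = (\<Prod>j<k. exp (- (q ^ Suc j / (1 - q))))"
    by (simp add: exp_sum[symmetric] sum_negf)
  also have "\<dots> \<le> (\<Prod>j<k. 1 - q * q ^ j)"
  proof (rule prod_mono)
    fix j assume "j \<in> {..<k}"
    have "q ^ Suc j \<le> q" using assms by (simp add: power_le_one mult_left_le)
    then show "0 \<le> exp (- (q ^ Suc j / (1 - q))) \<and> exp (- (q ^ Suc j / (1 - q))) \<le> 1 - q * q ^ j"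
      using one_minus_ge_exp[of "q ^ Suc j" q] assms by auto
  qed
  finally have 1: "exp (- (\<Sum>j<k. q ^ Suc j / (1 - q))) \<le> qpoch q q k" by (simp add: qpoch_def)
  have "(\<Sum>j<k. q ^ Suc j) \<le> (\<Sum>j<k. q ^ j)"
    by (rule sum_mono) (use assms in \<open>simp add: power_le_one mult_left_le\<close>)
  also have "\<dots> \<le> 1 / (1 - q)"
    using assms by (simp add: sum_gp_strict field_simps)
  finally have S: "(\<Sum>j<k. q ^ Suc j) \<le> 1 / (1 - q)" .
  have "(\<Sum>j<k. q ^ Suc j) / (1 - q) \<le> 1 / (1 - q) / (1 - q)"
    using divide_right_mono[OF S, of "1 - q"] assms by simp
  then have "(\<Sum>j<k. q ^ Suc j / (1 - q)) \<le> 1 / (1 - q)^2"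
    by (simp add: sum_divide_distrib power2_eq_square)
  then have "qdelta q \<le> exp (- (\<Sum>j<k. q ^ Suc j / (1 - q)))"
    unfolding qdelta_def by simp
  with 1 show ?thesis by linarith
qed

lemma qdelta_pos: "0 < qdelta q" by (simp add: qdelta_def)

lemma qpoch_pos: "0 < q \<Longrightarrow> q < 1 \<Longrightarrow> 0 < qpoch q q k"
  using qpoch_lower qdelta_pos by (meson less_le_trans)

lemma summable_tri:
  fixes q X :: real
  assumes "0 < q" "q < 1"
  shows "summable (\<lambda>k. q ^ tri k * X ^ k)"
proof -
  have "(\<lambda>n. q ^ n * \<bar>X\<bar>) \<longlonglongrightarrow> 0 * \<bar>X\<bar>"
    by (intro tendsto_intros) (use assms in auto)
  then have "eventually (\<lambda>n. q ^ n * \<bar>X\<bar> < 1/2) sequentially"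
    by (intro order_tendstoD) auto
  then obtain N where N: "\<And>n. n \<ge> N \<Longrightarrow> q ^ n * \<bar>X\<bar> < 1/2"
    by (auto simp: eventually_sequentially)
  show ?thesis
  proof (rule summable_ratio_test[of "1/2" N])
    fix n assume "N \<le> n"
    have "norm (q ^ tri (Suc n) * X ^ Suc n) = (q ^ n * \<bar>X\<bar>) * norm (q ^ tri n * X ^ n)"
      using assms by (simp add: power_add abs_mult power_abs)
    also have "\<dots> \<le> 1/2 * norm (q ^ tri n * X ^ n)"
      using N[OF \<open>N \<le> n\<close>] by (intro mult_right_mono) auto
    finally show "norm (q ^ tri (Suc n) * X ^ Suc n) \<le> 1/2 * norm (q ^ tri n * X ^ n)" .
  qed simp
qed

definition ea :: "real \<Rightarrow> nat \<Rightarrow> real" where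
  "ea q k = (-1) ^ k * q ^ tri k / qpoch q q k"

definition fE :: "real \<Rightarrow> real \<Rightarrow> real" where
  "fE q x = (\<Sum>k. ea q k * x ^ k)"

lemma summable_ea:
  assumes "0 < q" "q < 1"
  shows "summable (\<lambda>k. ea q k * x ^ k)"
proof (rule summable_comparison_test')
  show "summable (\<lambda>k. q ^ tri k * \<bar>x\<bar> ^ k / qdelta q)"
    using summable_tri[OF assms, of "\<bar>x\<bar>"] by (intro summable_divide)
  fix n
  have "norm (ea q n * x ^ n) = q ^ tri n * \<bar>x\<bar> ^ n / qpoch q q n"
    using qpoch_pos[OF assms, of n] assms by (simp add: ea_def abs_mult power_abs)
  also have "\<dots> \<le> q ^ tri n * \<bar>x\<bar> ^ n / qdelta q"
    using qpoch_lower[OF assms, of n] qdelta_pos[of q] qpoch_pos[OF assms, of n] assms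
    by (intro divide_left_mono) auto
  finally show "norm (ea q n * x ^ n) \<le> q ^ tri n * \<bar>x\<bar> ^ n / qdelta q" .
qed

lemma ea_Suc:
  assumes "0 < q" "q < 1"
  shows "ea q (Suc j) * (1 - q ^ Suc j) = - (ea q j * q ^ j)"
proof -
  have "q * q ^ j < 1" using assms by (metis power_Suc power_Suc_less_one)
  then show ?thesis using qpoch_pos[OF assms, of j] assms
  by (simp add: ea_def qpoch_Suc power_add field_simps)
qed

lemma fE_funeq:
  assumes "0 < q" "q < 1"
  shows "fE q x = (1 - x) * fE q (q * x)"
proof -
  let ?g = "\<lambda>k. ea q k * x ^ k - ea q k * (q * x) ^ k"
  have s: "summable ?g" by (intro summable_diff summable_ea assms)
  have "fE q x - fE q (q * x) = (\<Sum>k. ?g k)"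
    unfolding fE_def by (intro suminf_diff summable_ea assms)
  also have "\<dots> = (\<Sum>k. ?g (Suc k))"
    using suminf_split_head[OF s] by simp
  also have "\<dots> = (\<Sum>k. - x * (ea q k * (q * x) ^ k))"
  proof (rule suminf_cong)
    fix k
    have "?g (Suc k) = ea q (Suc k) * (1 - q ^ Suc k) * x ^ Suc k"
      by (simp add: algebra_simps power_mult_distrib)
    also have "\<dots> = - x * (ea q k * (q * x) ^ k)"
      using ea_Suc[OF assms, of k] by (simp add: power_mult_distrib)
    finally show "?g (Suc k) = - x * (ea q k * (q * x) ^ k)" .
  qed
  also have "\<dots> = - x * fE q (q * x)"
    unfolding fE_def by (intro suminf_mult summable_ea assms)
  finally show ?thesis by (simp add: algebra_simps)
qed

lemma fE_zero_pts:
  assumes "0 < q" "q < 1"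
  shows "fE q (1 / q ^ m) = 0"
proof (induction m)
  case 0
  then show ?case using fE_funeq[OF assms, of 1] by simp
next
  case (Suc m)
  have "fE q (1 / q ^ Suc m) = (1 - 1 / q ^ Suc m) * fE q (q * (1 / q ^ Suc m))"
    by (rule fE_funeq[OF assms])
  also have "q * (1 / q ^ Suc m) = 1 / q ^ m" using assms by simp
  finally show ?case using Suc by simp
qed

lemma fE_iter:
  assumes "0 < q" "q < 1"
  shows "fE q q = qpoch q q N * fE q (q ^ Suc N)"
proof (induction N)
  case 0 then show ?case by (simp add: qpoch_def)
next
  case (Suc N)
  have "fE q (q ^ Suc N) = (1 - q ^ Suc N) * fE q (q ^ Suc (Suc N))"
    using fE_funeq[OF assms, of "q ^ Suc N"] by simp
  then show ?case using Suc by (simp add: qpoch_Suc)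
qed

lemma qpoch_lim:
  assumes "0 < q" "q < 1"
  shows "(\<lambda>N. qpoch q q N) \<longlonglongrightarrow> qpoch_inf q"
proof -
  have "convergent_prod (\<lambda>k. 1 + (-(q ^ Suc k)))"
  proof (rule summable_imp_convergent_prod_real)
    show "summable (\<lambda>k. \<bar>-(q ^ Suc k)\<bar>)"
      using assms by (simp add: summable_geometric)
    fix k show "-(q ^ Suc k) \<noteq> -1"
      using assms by (metis add.inverse_inverse less_irrefl power_Suc_less_one)
  qed
  then have "(\<lambda>n. \<Prod>i\<le>n. 1 - q ^ Suc i) \<longlonglongrightarrow> qpoch_inf q"
    unfolding qpoch_inf_def using convergent_prod_LIMSEQ by fastforce
  then have "(\<lambda>n. \<Prod>i<Suc n. 1 - q ^ Suc i) \<longlonglongrightarrow> qpoch_inf q"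
    by (simp add: lessThan_Suc_atMost)
  then have "(\<lambda>n. qpoch q q (Suc n)) \<longlonglongrightarrow> qpoch_inf q"
    by (simp add: qpoch_def)
  then show ?thesis by (rule LIMSEQ_imp_Suc)
qed

lemma fE_q:
  assumes "0 < q" "q < 1"
  shows "fE q q = qpoch_inf q"
proof -
  have c: "isCont (fE q) 0"
    unfolding fE_def[abs_def] by (rule isCont_powser[of _ 1]) (use summable_ea[OF assms, of 1] in auto)
  have "(\<lambda>N. q ^ Suc N) \<longlonglongrightarrow> 0"
    using assms by (intro LIMSEQ_power_zero[THEN LIMSEQ_Suc]) auto
  then have "(\<lambda>N. fE q (q ^ Suc N)) \<longlonglongrightarrow> fE q 0"
    using c isCont_tendsto_compose by blast
  moreover have "fE q 0 = 1"
    unfolding fE_def using powser_zero[of "ea q"] by (simp add: ea_def qpoch_def)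
  ultimately have "(\<lambda>N. fE q (q ^ Suc N)) \<longlonglongrightarrow> 1" by simp
  then have "(\<lambda>N. qpoch q q N * fE q (q ^ Suc N)) \<longlonglongrightarrow> qpoch_inf q * 1"
    using qpoch_lim[OF assms] by (intro tendsto_mult)
  then have "(\<lambda>N. fE q q) \<longlonglongrightarrow> qpoch_inf q"
    using fE_iter[OF assms] by simp
  then show ?thesis by (simp add: LIMSEQ_const_iff)
qed




lemma tri_real: "real (tri n) = real n * (real n - 1) / 2"
  by (induction n) (auto simp: field_simps)

lemma key_pt:
  fixes q t :: real and n :: nat
  assumes "0 < q" "q < 1"
  shows "exp (-t) ^ n * (exp t * w_SW (exp t) q) =
    exp (- ln q * (real n * (real n - 1) / 2)) *
    normal_density (ln q / 2 - (1 - real n) * ln q) (sqrt (- ln q)) t"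
proof -
  define L where "L = ln q"
  have L: "L < 0" using assms by (simp add: L_def)
  have e1: "exp (-t) ^ n = exp (- (real n * t))"
    by (metis exp_of_nat_mult mult_minus_right)
  have lnw: "ln (exp t / sqrt q) = t - L / 2"
    using assms by (simp add: ln_div ln_sqrt L_def)
  have s: "sqrt (-1 / (2 * pi * L)) = 1 / sqrt (2 * pi * (sqrt (- L))\<^sup>2)"
  proof -
    have "-1 / (2 * pi * L) = 1 / (2 * pi * (- L))" by simp
    moreover have "(sqrt (- L))\<^sup>2 = - L" using L by simp
    ultimately show ?thesis by (simp only: real_sqrt_divide real_sqrt_one)
  qed
  have ex: "- (real n * t) + t + 1 / (2 * L) * (t - L / 2)\<^sup>2 =
     - L * (real n * (real n - 1) / 2) + (- (t - (L / 2 - (1 - real n) * L))\<^sup>2 / (2 * (sqrt (- L))\<^sup>2))"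
    using L by (simp add: field_simps power2_eq_square)
  have "exp (-t) ^ n * (exp t * w_SW (exp t) q) =
     sqrt (-1 / (2 * pi * L)) * exp (- (real n * t) + t + 1 / (2 * L) * (t - L / 2)\<^sup>2)"
  proof -
    have "exp (- (real n * t) + t + 1 / (2 * L) * (t - L / 2)\<^sup>2) =
      exp (- (real n * t)) * exp t * exp (1 / (2 * L) * (t - L / 2)\<^sup>2)"
      by (simp only: exp_add)
    then show ?thesis unfolding w_SW_def e1 lnw L_def[symmetric] by simp
  qed
  also have "\<dots> = exp (- L * (real n * (real n - 1) / 2)) *
    normal_density (L / 2 - (1 - real n) * L) (sqrt (- L)) t"
    unfolding ex s normal_density_def by (simp only: exp_add) (simp add: algebra_simps)
  finally show ?thesis by (simp add: L_def)
qed

lemma mom: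
  fixes q :: real and n :: nat
  assumes "0 < q" "q < 1"
  shows "has_bochner_integral lborel (\<lambda>t. exp (-t) ^ n * (exp t * w_SW (exp t) q)) (1 / q ^ tri n)"
proof -
  have sp: "0 < sqrt (- ln q)" using assms by simp
  have "has_bochner_integral lborel (normal_density (ln q / 2 - (1 - real n) * ln q) (sqrt (- ln q))) 1"
    using integrable_normal_density[OF sp] integral_normal_density[OF sp]
    by (simp add: has_bochner_integral_iff)
  then have "has_bochner_integral lborel (\<lambda>t. exp (- ln q * (real n * (real n - 1) / 2)) *
    normal_density (ln q / 2 - (1 - real n) * ln q) (sqrt (- ln q)) t) (exp (- ln q * (real n * (real n - 1) / 2)) * 1)"
    by (intro has_bochner_integral_mult_right)
  moreover have "exp (- ln q * (real n * (real n - 1) / 2)) = 1 / q ^ tri n"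
  proof -
    have "q ^ tri n = exp (ln q * real (tri n))"
      using assms by (metis exp_ln exp_of_nat_mult mult.commute)
    moreover have "exp (- ln q * (real n * (real n - 1) / 2)) = 1 / exp (ln q * (real n * (real n - 1) / 2))"
      by (simp add: exp_minus inverse_eq_divide)
    ultimately show ?thesis by (simp add: tri_real)
  qed
  ultimately show ?thesis using key_pt[OF assms] by simp
qed




definition bk :: "real \<Rightarrow> nat \<Rightarrow> real" where
  "bk q k = (-1) ^ k * q ^ (k^2) / qpoch q q k"

definition Fw :: "real \<Rightarrow> real \<Rightarrow> real" where
  "Fw q t = exp t * w_SW (exp t) q"

definition Af :: "real \<Rightarrow> real \<Rightarrow> real" where
  "Af q x = (\<Sum>k. bk q k * x ^ k)"

definition fterm :: "real \<Rightarrow> nat \<Rightarrow> nat \<Rightarrow> real \<Rightarrow> real" where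
  "fterm q j k t = (bk q j * exp (-t) ^ j) * (bk q k * exp (-t) ^ k) * Fw q t"

definition Gj :: "real \<Rightarrow> nat \<Rightarrow> real \<Rightarrow> real" where
  "Gj q j t = (bk q j * exp (-t) ^ j) * Af q (exp (-t)) * Fw q t"

lemma w_nonneg: "0 < q \<Longrightarrow> q < 1 \<Longrightarrow> 0 \<le> w_SW x q"
  unfolding w_SW_def by (intro mult_nonneg_nonneg) (auto simp: divide_nonpos_neg mult_nonneg_nonpos)

lemma Fw_nonneg: "0 < q \<Longrightarrow> q < 1 \<Longrightarrow> 0 \<le> Fw q t"
  unfolding Fw_def using w_nonneg by simp

lemma ramanujanA_Af: "ramanujanA q x = Af q x"
  unfolding ramanujanA_def Af_def bk_def
  by (intro suminf_cong) (subst power_minus, simp)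

lemma abs_bk:
  assumes "0 < q" "q < 1"
  shows "\<bar>bk q k\<bar> = q ^ (k^2) / qpoch q q k"
  using qpoch_pos[OF assms, of k] assms by (simp add: bk_def abs_mult)

lemma summable_bk_abs:
  assumes "0 < q" "q < 1" "0 \<le> X"
  shows "summable (\<lambda>k. \<bar>bk q k\<bar> * X ^ k)"
proof (rule summable_comparison_test')
  show "summable (\<lambda>k. q ^ tri k * X ^ k / qdelta q)"
    using summable_tri[of q X] assms by (intro summable_divide) auto
  fix n
  have "q ^ (n^2) \<le> q ^ tri n"
    using assms tri_le_sq[of n] by (intro power_decreasing) (auto simp: power2_eq_square)
  then have "q ^ (n^2) * X ^ n / qpoch q q n \<le> q ^ tri n * X ^ n / qpoch q q n"
    using qpoch_pos[of q n] assms by (intro divide_right_mono mult_right_mono) auto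
  also have "\<dots> \<le> q ^ tri n * X ^ n / qdelta q"
    using qpoch_lower[of q n] qdelta_pos[of q] qpoch_pos[of q n] assms mult_pos_pos[OF qpoch_pos[of q n] qdelta_pos[of q]]
    by (intro divide_left_mono) auto
  finally show "norm (\<bar>bk q n\<bar> * X ^ n) \<le> q ^ tri n * X ^ n / qdelta q"
    using assms abs_bk[of q n] qpoch_pos[of q n] by simp
qed

lemma summable_bk:
  assumes "0 < q" "q < 1"
  shows "summable (\<lambda>k. bk q k * x ^ k)"
  by (rule summable_rabs_cancel)
     (use summable_bk_abs[OF assms, of "\<bar>x\<bar>"] in \<open>simp add: abs_mult power_abs\<close>)

lemma fterm_int:
  assumes "0 < q" "q < 1"
  shows "has_bochner_integral lborel (fterm q j k) (bk q j * bk q k * (1 / q ^ tri (j + k)))"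
proof -
  have "has_bochner_integral lborel (\<lambda>t. (bk q j * bk q k) * (exp (-t) ^ (j + k) * (exp t * w_SW (exp t) q)))
     (bk q j * bk q k * (1 / q ^ tri (j + k)))"
    by (intro has_bochner_integral_mult_right mom assms)
  moreover have "(\<lambda>t. (bk q j * bk q k) * (exp (-t) ^ (j + k) * (exp t * w_SW (exp t) q))) = fterm q j k"
    by (auto simp: fterm_def Fw_def power_add fun_eq_iff)
  ultimately show ?thesis by simp
qed

lemma fterm_norm_int:
  assumes "0 < q" "q < 1"
  shows "has_bochner_integral lborel (\<lambda>t. norm (fterm q j k t)) (\<bar>bk q j * bk q k\<bar> * (1 / q ^ tri (j + k)))"
proof -
  have "has_bochner_integral lborel (\<lambda>t. \<bar>bk q j * bk q k\<bar> * (exp (-t) ^ (j + k) * (exp t * w_SW (exp t) q)))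
     (\<bar>bk q j * bk q k\<bar> * (1 / q ^ tri (j + k)))"
    by (intro has_bochner_integral_mult_right mom assms)
  moreover have "(\<lambda>t. \<bar>bk q j * bk q k\<bar> * (exp (-t) ^ (j + k) * (exp t * w_SW (exp t) q))) = (\<lambda>t. norm (fterm q j k t))"
    using w_nonneg[OF assms]
    by (auto simp: fterm_def Fw_def power_add fun_eq_iff abs_mult)
  ultimately show ?thesis by simp
qed

lemma sq_ineq: "(j + k)^2 \<le> 2 * (j^2 + k^2::nat)"
proof -
  have "int ((j + k)^2) \<le> int (2 * (j^2 + k^2))"
  proof -
    have "0 \<le> (int j - int k)^2" by simp
    then show ?thesis by (simp add: power2_eq_square algebra_simps)
  qed
  then show ?thesis by linarith
qed

lemma term_bound:
  assumes "0 < q" "q < 1"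
  shows "\<bar>bk q j * bk q k\<bar> * (1 / q ^ tri (j + k)) \<le> sqrt q ^ j * sqrt q ^ k / (qdelta q)^2"
proof -
  define s where "s = sqrt q"
  have s: "0 < s" "s < 1" "q = s^2" using assms by (auto simp: s_def)
  have e: "2 * tri (j + k) + (j + k) \<le> 2 * (j^2 + k^2)"
  proof -
    have "2 * tri (j + k) + (j + k) = (j + k)^2"
      using two_tri[of "j+k"] by (cases "j + k") (auto simp: power2_eq_square)
    then show ?thesis using sq_ineq[of j k] by simp
  qed
  have "q ^ (j^2 + k^2) = s ^ (2 * (j^2 + k^2))" unfolding s(3) by (rule power_mult[symmetric])
  also have "\<dots> \<le> s ^ (2 * tri (j + k) + (j + k))"
    using s(1,2) e by (intro power_decreasing) auto
  also have "\<dots> = (s^2) ^ tri (j + k) * (s ^ j * s ^ k)"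
    by (simp only: power_add power_mult)
  finally have A0: "q ^ (j^2 + k^2) \<le> q ^ tri (j + k) * (s ^ j * s ^ k)" unfolding s(3) .
  have qp: "0 < q ^ tri (j + k)" using assms by simp
  have A: "q ^ (j^2 + k^2) / q ^ tri (j + k) \<le> s ^ j * s ^ k"
    using A0 qp by (simp add: divide_le_eq mult.commute)
  have "\<bar>bk q j * bk q k\<bar> * (1 / q ^ tri (j + k)) = (q ^ (j^2 + k^2) / q ^ tri (j + k)) / (qpoch q q j * qpoch q q k)"
    using assms by (simp add: abs_mult abs_bk power_add)
  also have "\<dots> \<le> (s ^ j * s ^ k) / (qpoch q q j * qpoch q q k)"
    using A qpoch_pos[OF assms, of j] qpoch_pos[OF assms, of k] by (intro divide_right_mono) auto
  also have "\<dots> \<le> (s ^ j * s ^ k) / (qdelta q * qdelta q)"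
  proof -
    have "qdelta q * qdelta q \<le> qpoch q q j * qpoch q q k"
      using qpoch_lower[OF assms, of j] qpoch_lower[OF assms, of k] qdelta_pos[of q] qpoch_pos[OF assms, of j]
      by (metis less_imp_le mult_mono)
    moreover have "0 < qdelta q * qdelta q" using qdelta_pos[of q] by simp
    moreover have "0 \<le> s ^ j * s ^ k" using s(1) by simp
    moreover have "0 < (qpoch q q j * qpoch q q k) * (qdelta q * qdelta q)"
      using qpoch_pos[OF assms, of j] qpoch_pos[OF assms, of k] qdelta_pos[of q] by simp
    ultimately show ?thesis by (intro divide_left_mono)
  qed
  finally have "\<bar>bk q j * bk q k\<bar> * (1 / q ^ tri (j + k)) \<le> (s ^ j * s ^ k) / (qdelta q * qdelta q)" .
  then show ?thesis using s_def power2_eq_square[of "qdelta q"] by simp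
qed




lemma inner_term:
  assumes "0 < q" "q < 1"
  shows "bk q j * bk q k * (1 / q ^ tri (j + k)) = (bk q j / q ^ tri j) * (ea q k * (q / q ^ j) ^ k)"
proof -
  have k2: "k^2 = tri k + tri k + k"
    using two_tri[of k] by (cases k) (auto simp: power2_eq_square)
  have a: "q ^ (k^2) = q ^ tri k * q ^ tri k * q ^ k" unfolding k2 by (simp add: power_add)
  have b: "q ^ tri (j + k) = q ^ tri j * q ^ (j * k) * q ^ tri k" by (simp add: tri_add power_add)
  have c: "(q / q ^ j) ^ k = q ^ k / q ^ (j * k)" by (simp add: power_divide power_mult)
  show ?thesis
    unfolding bk_def ea_def a b c using assms qpoch_pos[OF assms, of k] qpoch_pos[OF assms, of j]
    by (simp add: field_simps)
qed

lemma inner_sum: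
  assumes "0 < q" "q < 1"
  shows "(\<lambda>k. bk q j * bk q k * (1 / q ^ tri (j + k))) sums (if j = 0 then qpoch_inf q else 0)"
proof -
  have "(\<lambda>k. ea q k * (q / q ^ j) ^ k) sums fE q (q / q ^ j)"
    unfolding fE_def by (intro summable_sums summable_ea assms)
  then have "(\<lambda>k. (bk q j / q ^ tri j) * (ea q k * (q / q ^ j) ^ k)) sums ((bk q j / q ^ tri j) * fE q (q / q ^ j))"
    by (rule sums_mult)
  moreover have "(bk q j / q ^ tri j) * fE q (q / q ^ j) = (if j = 0 then qpoch_inf q else 0)"
  proof (cases j)
    case 0
    then show ?thesis using fE_q[OF assms] by (simp add: bk_def qpoch_def)
  next
    case (Suc m)
    have "q / q ^ j = 1 / q ^ m" using assms Suc by simp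
    then show ?thesis using fE_zero_pts[OF assms, of m] Suc by simp
  qed
  ultimately show ?thesis using inner_term[OF assms] by simp
qed

lemma summable_geo2:
  assumes "0 < q" "q < 1"
  shows "summable (\<lambda>k. sqrt q ^ j * sqrt q ^ k / (qdelta q)^2)"
  using assms by (intro summable_divide summable_mult summable_geometric) auto

lemma step1:
  assumes "0 < q" "q < 1"
  shows "integrable lborel (Gj q j)"
    and "integral\<^sup>L lborel (Gj q j) = (if j = 0 then qpoch_inf q else 0)"
    and "integral\<^sup>L lborel (\<lambda>t. norm (Gj q j t)) \<le> sqrt q ^ j / (1 - sqrt q) / (qdelta q)^2"
proof -
  have int: "\<And>k. integrable lborel (fterm q j k)"
    by (rule integrable.intros[OF fterm_int[OF assms]])
  have intn: "\<And>k. integrable lborel (\<lambda>t. norm (fterm q j k t))"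
    by (rule integrable.intros[OF fterm_norm_int[OF assms]])
  have in_eq: "\<And>k. integral\<^sup>L lborel (\<lambda>t. norm (fterm q j k t)) = \<bar>bk q j * bk q k\<bar> * (1 / q ^ tri (j + k))"
    by (rule has_bochner_integral_integral_eq[OF fterm_norm_int[OF assms]])
  have i_eq: "\<And>k. integral\<^sup>L lborel (fterm q j k) = bk q j * bk q k * (1 / q ^ tri (j + k))"
    by (rule has_bochner_integral_integral_eq[OF fterm_int[OF assms]])
  have nrm: "\<And>k t. norm (fterm q j k t) = (\<bar>bk q j\<bar> * exp (-t) ^ j * Fw q t) * (\<bar>bk q k\<bar> * exp (-t) ^ k)"
    using Fw_nonneg[OF assms] by (simp add: fterm_def abs_mult)
  have sn: "\<And>t. summable (\<lambda>k. norm (fterm q j k t))"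
    unfolding nrm by (intro summable_mult summable_bk_abs assms) simp
  have sI: "summable (\<lambda>k. integral\<^sup>L lborel (\<lambda>t. norm (fterm q j k t)))"
  proof (rule summable_comparison_test')
    show "summable (\<lambda>k. sqrt q ^ j * sqrt q ^ k / (qdelta q)^2)" by (rule summable_geo2[OF assms])
    fix k show "norm (integral\<^sup>L lborel (\<lambda>t. norm (fterm q j k t))) \<le> sqrt q ^ j * sqrt q ^ k / (qdelta q)^2"
      unfolding in_eq using term_bound[OF assms, of j k] assms by simp
  qed
  have sumG: "\<And>t. (\<Sum>k. fterm q j k t) = Gj q j t"
  proof -
    fix t
    have "(\<Sum>k. fterm q j k t) = (\<Sum>k. (bk q j * exp (-t) ^ j) * (bk q k * exp (-t) ^ k) * Fw q t)"
      by (simp add: fterm_def)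
    also have "\<dots> = (\<Sum>k. (bk q j * exp (-t) ^ j) * (bk q k * exp (-t) ^ k)) * Fw q t"
      by (intro suminf_mult2[symmetric] summable_mult summable_bk assms)
    also have "(\<Sum>k. (bk q j * exp (-t) ^ j) * (bk q k * exp (-t) ^ k)) = (bk q j * exp (-t) ^ j) * Af q (exp (-t))"
      unfolding Af_def by (intro suminf_mult summable_bk assms)
    finally show "(\<Sum>k. fterm q j k t) = Gj q j t" by (simp add: Gj_def)
  qed
  have A: "integrable lborel (\<lambda>t. \<Sum>k. fterm q j k t)"
    by (rule integrable_suminf[OF int AE_I2[OF sn] sI])
  have B: "(\<lambda>k. integral\<^sup>L lborel (fterm q j k)) sums (\<integral>t. (\<Sum>k. fterm q j k t) \<partial>lborel)"
    by (rule sums_integral[OF int AE_I2[OF sn] sI])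
  show i1: "integrable lborel (Gj q j)" using A unfolding sumG .
  show "integral\<^sup>L lborel (Gj q j) = (if j = 0 then qpoch_inf q else 0)"
    using B inner_sum[OF assms, of j] unfolding sumG i_eq by (simp add: sums_unique2)
  have sn2: "\<And>t. summable (\<lambda>k. norm (norm (fterm q j k t)))" using sn by simp
  have sI2: "summable (\<lambda>k. integral\<^sup>L lborel (\<lambda>t. norm (norm (fterm q j k t))))" using sI by simp
  have A2: "integrable lborel (\<lambda>t. \<Sum>k. norm (fterm q j k t))"
    by (rule integrable_suminf[OF intn AE_I2[OF sn2] sI2])
  have B2: "integral\<^sup>L lborel (\<lambda>t. \<Sum>k. norm (fterm q j k t)) = (\<Sum>k. integral\<^sup>L lborel (\<lambda>t. norm (fterm q j k t)))"
    by (rule integral_suminf[OF intn AE_I2[OF sn2] sI2])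
  have "integral\<^sup>L lborel (\<lambda>t. norm (Gj q j t)) \<le> integral\<^sup>L lborel (\<lambda>t. \<Sum>k. norm (fterm q j k t))"
  proof (rule integral_mono)
    show "integrable lborel (\<lambda>t. norm (Gj q j t))" using i1 by (rule integrable_norm)
    show "integrable lborel (\<lambda>t. \<Sum>k. norm (fterm q j k t))" by (rule A2)
    fix t
    show "norm (Gj q j t) \<le> (\<Sum>k. norm (fterm q j k t))"
      unfolding sumG[symmetric] by (rule summable_norm[OF sn])
  qed
  also have "\<dots> = (\<Sum>k. integral\<^sup>L lborel (\<lambda>t. norm (fterm q j k t)))" by (rule B2)
  also have "\<dots> \<le> (\<Sum>k. sqrt q ^ j * sqrt q ^ k / (qdelta q)^2)"
    by (intro suminf_le sI summable_geo2 assms) (metis in_eq term_bound[OF assms])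
  also have "\<dots> = sqrt q ^ j * (\<Sum>k. sqrt q ^ k) / (qdelta q)^2"
    using assms by (simp add: suminf_divide suminf_mult summable_geometric summable_divide)
  also have "\<dots> = sqrt q ^ j / (1 - sqrt q) / (qdelta q)^2"
    using assms by (simp add: suminf_geometric)
  finally show "integral\<^sup>L lborel (\<lambda>t. norm (Gj q j t)) \<le> sqrt q ^ j / (1 - sqrt q) / (qdelta q)^2" .
qed

lemma step2:
  assumes "0 < q" "q < 1"
  shows "has_bochner_integral lborel (\<lambda>t. Af q (exp (-t)) * Af q (exp (-t)) * Fw q t) (qpoch_inf q)"
proof -
  have int: "\<And>j. integrable lborel (Gj q j)" using step1(1)[OF assms] .
  have nrm: "\<And>j t. norm (Gj q j t) = (\<bar>Af q (exp (-t))\<bar> * Fw q t) * (\<bar>bk q j\<bar> * exp (-t) ^ j)"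
    using Fw_nonneg[OF assms] by (simp add: Gj_def abs_mult)
  have sn: "\<And>t. summable (\<lambda>j. norm (Gj q j t))"
    unfolding nrm by (intro summable_mult summable_bk_abs assms) simp
  have sI: "summable (\<lambda>j. integral\<^sup>L lborel (\<lambda>t. norm (Gj q j t)))"
  proof (rule summable_comparison_test')
    show "summable (\<lambda>j. sqrt q ^ j / (1 - sqrt q) / (qdelta q)^2)"
      using assms by (intro summable_divide summable_geometric) auto
    fix j show "norm (integral\<^sup>L lborel (\<lambda>t. norm (Gj q j t))) \<le> sqrt q ^ j / (1 - sqrt q) / (qdelta q)^2"
      using step1(3)[OF assms, of j] by (simp add: integral_nonneg_AE)
  qed
  have sumG: "\<And>t. (\<Sum>j. Gj q j t) = Af q (exp (-t)) * Af q (exp (-t)) * Fw q t"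
  proof -
    fix t
    have "(\<Sum>j. Gj q j t) = (\<Sum>j. (bk q j * exp (-t) ^ j) * (Af q (exp (-t)) * Fw q t))"
      by (simp add: Gj_def mult.assoc)
    also have "\<dots> = Af q (exp (-t)) * (Af q (exp (-t)) * Fw q t)"
      unfolding Af_def by (intro suminf_mult2[symmetric] summable_bk assms)
    finally show "(\<Sum>j. Gj q j t) = Af q (exp (-t)) * Af q (exp (-t)) * Fw q t" by (simp add: mult.assoc)
  qed
  have A: "integrable lborel (\<lambda>t. \<Sum>j. Gj q j t)"
    by (rule integrable_suminf[OF int AE_I2[OF sn] sI])
  have B: "(\<lambda>j. integral\<^sup>L lborel (Gj q j)) sums (\<integral>t. (\<Sum>j. Gj q j t) \<partial>lborel)"
    by (rule sums_integral[OF int AE_I2[OF sn] sI])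
  have C: "(\<lambda>j. integral\<^sup>L lborel (Gj q j)) sums qpoch_inf q"
    unfolding step1(2)[OF assms] using sums_single[of 0 "\<lambda>_. qpoch_inf q"] by simp
  show ?thesis unfolding has_bochner_integral_iff using A B C sumG
    by (simp add: sums_unique2)
qed




theorem mainTheorem4:
  fixes q :: real
  assumes "0 < q" and "q < 1"
  shows "((\<lambda>u. (ramanujanA q (1 / u))^2 * w_SW u q) has_integral qpoch_inf q) {0<..}"
proof -
  define f where "f = (\<lambda>u. (ramanujanA q (1 / u))^2 * w_SW u q)"
  define g where "g = (\<lambda>x. \<bar>exp x\<bar> * f (exp x))"
  have geq: "g = (\<lambda>t. Af q (exp (-t)) * Af q (exp (-t)) * Fw q t)"
    by (auto simp: fun_eq_iff g_def f_def ramanujanA_Af Fw_def exp_minus inverse_eq_divide power2_eq_square)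
  have H: "has_bochner_integral lborel g (qpoch_inf q)"
    unfolding geq by (rule step2[OF assms])
  have I: "integrable lborel g" using H by (rule integrable.intros)
  have IE: "integral\<^sup>L lborel g = qpoch_inf q" using H by (rule has_bochner_integral_integral_eq)
  have meas: "g \<in> borel_measurable lborel" using I by (rule borel_measurable_integrable)
  have absg: "g absolutely_integrable_on UNIV"
    unfolding set_integrable_def using integrable_completion[OF meas] I by simp
  have ig: "integral UNIV g = qpoch_inf q" using integral_lborel[OF I] IE by simp
  have inj: "inj_on exp (UNIV :: real set)" by (simp add: inj_on_def)
  have der: "\<And>x. x \<in> UNIV \<Longrightarrow> (exp has_field_derivative exp x) (at x within UNIV)"
    by (simp add: DERIV_exp)
  have "f absolutely_integrable_on (exp ` UNIV) \<and> integral (exp ` UNIV) f = qpoch_inf q"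
    using has_absolute_integral_change_of_variables_1'[of UNIV exp exp f "qpoch_inf q", OF _ der inj]
      absg ig unfolding g_def by simp
  moreover have "exp ` (UNIV :: real set) = {0<..}"
  proof (intro equalityI subsetI)
    fix x :: real assume "x \<in> {0<..}"
    then have "x = exp (ln x)" by simp
    then show "x \<in> exp ` UNIV" by blast
  qed auto
  ultimately have fa: "f absolutely_integrable_on {0<..}" and fi: "integral {0<..} f = qpoch_inf q"
    by auto
  have "f integrable_on {0<..}" by (rule set_lebesgue_integral_eq_integral(1)[OF fa])
  then have "(f has_integral integral {0<..} f) {0<..}" by (rule integrable_integral)
  then have "(f has_integral qpoch_inf q) {0<..}" by (simp only: fi)
  then show ?thesis by (simp only: f_def)
qed



end
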